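(* Let $n\ge0$ and $\gamma$ a composition of $n$. Then $$\blacktriangle(\kappa_{\mathrm{set}(\gamma)}(\nu))=\sum_{\alpha\odot\beta=\gamma}\kappa_{\mathrm{set}(\alpha)}(\nu)\otimes\kappa_{\mathrm{set}(\beta)}(\nu),$$ the sum over all pairs of compositions $(\alpha,\beta)$ (possibly empty) with $\alpha\odot\beta=\gamma$.
   Context: Fix an integer $\nu>1$; $C_\nu$ is the additive cyclic group of order $\nu$; $[a,b]=\{t\in\mathbb Z:a\le t\le b\}$ (empty if $a>b$), $[n]=[1,n]$; $Q_n(\nu)=\bigoplus_{i\in[n-1]}C_\nu$ (trivial if $n\le1$). For $K\subseteq[n-1]$, $\kappa_K(\nu)$ is the function on $Q_n(\nu)$ equal to $1$ at $\mathbf g$ if $\{i:g_i\ne0\}=K$ and $0$ otherwise (for $n\le1$, $\kappa_\emptyset(\nu)$ is the constant $1$). Compositions: for a composition $\alpha=(\alpha_1,\dots,\alpha_l)$ of $n$, $\mathrm{set}(\alpha)=\{\alpha_1,\alpha_1+\alpha_2,\dots,\alpha_1+\dots+\alpha_{l-1}\}\subseteq[n-1]$, and $\kappa_{\mathrm{set}(\alpha)}(\nu)$ lives on $Q_{|\alpha|}(\nu)$; the empty composition has size $0$ and empty set. Near-concatenation: $(\alpha_1,\dots,\alpha_l)\odot(\beta_1,\dots,\beta_k)=(\alpha_1,\dots,\alpha_l+\beta_1,\beta_2,\dots,\beta_k)$, with $\emptyset\odot\beta=\beta$ and $\alpha\odot\emptyset=\alpha$. Coproduct: for a function $\phi$ on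 $Q_n(\nu)$, $\blacktriangle_0(\phi)=1\otimes\phi$, $\blacktriangle_n(\phi)=\phi\otimes1$, and for $1\le k\le n-1$, $\blacktriangle_k(\phi)\in\mathrm{Fun}(Q_k(\nu))\otimes\mathrm{Fun}(Q_{n-k}(\nu))$ corresponds under the canonical isomorphism to $(\mathbf a,\mathbf b)\mapsto\phi(a_1,\dots,a_{k-1},0,b_1,\dots,b_{n-k-1})$; $\blacktriangle=\sum_{k=0}^n\blacktriangle_k$. *)

theory Defs
  imports Main
begin

text \<open>Elements of Q_m(nu) = direct sum over i in [m-1] of C_nu are encoded as lists
  g = [g_1, ..., g_{m-1}] of residues in {0..<nu} (the empty list when m <= 1).\<close>
definition Q :: "nat \<Rightarrow> nat \<Rightarrow> nat list set" where
  "Q \<nu> m = {g. length g = m - 1 \<and> (\<forall>x\<in>set g. x < \<nu>)}"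

definition kappa :: "nat set \<Rightarrow> nat list \<Rightarrow> 'r::comm_ring_1" where
  "kappa K g = (if {i \<in> {1..length g}. g ! (i - 1) \<noteq> 0} = K then 1 else 0)"

definition is_comp :: "nat list \<Rightarrow> bool" where
  "is_comp \<alpha> \<longleftrightarrow> (\<forall>x\<in>set \<alpha>. 0 < x)"

definition comp_set :: "nat list \<Rightarrow> nat set" where
  "comp_set \<alpha> = {sum_list (take i \<alpha>) | i. 1 \<le> i \<and> i < length \<alpha>}"

definition near_concat :: "nat list \<Rightarrow> nat list \<Rightarrow> nat list" where
  "near_concat \<alpha> \<beta> =
     (if \<alpha> = [] then \<beta> else if \<beta> = [] then \<alpha>
      else butlast \<alpha> @ [last \<alpha> + hd \<beta>] @ tl \<beta>)"

text \<open>The degree-k component of the coproduct of a function phi on Q_n(nu), viewed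
  (via the canonical isomorphism Fun(Q_k) \<otimes> Fun(Q_{n-k}) = Fun(Q_k \<times> Q_{n-k}))
  as a function of (a, b) with a \<in> Q_k(nu), b \<in> Q_{n-k}(nu).\<close>
definition coprod_k :: "nat \<Rightarrow> (nat list \<Rightarrow> 'r) \<Rightarrow> nat \<Rightarrow> nat list \<Rightarrow> nat list \<Rightarrow> 'r" where
  "coprod_k n \<phi> k a b =
     (if k = 0 then \<phi> b else if k = n then \<phi> a else \<phi> (a @ [0] @ b))"

end

theory Submission
  imports Defs
begin

definition supp :: "nat list \<Rightarrow> nat set" where
  "supp g = {i \<in> {1..length g}. g ! (i - 1) \<noteq> 0}"

lemma kappa_supp: "kappa K g = (if supp g = K then 1 else 0)"
  by (simp add: kappa_def supp_def)

lemma supp_bound: "supp g \<subseteq> {1..length g}"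
  by (auto simp: supp_def)

lemma supp_Nil: "supp [] = {}"
  by (simp add: supp_def)

lemma supp_app: "supp (a @ 0 # b) = supp a \<union> (\<lambda>i. i + Suc (length a)) ` supp b"
proof (rule set_eqI)
  fix i
  show "i \<in> supp (a @ 0 # b) \<longleftrightarrow> i \<in> supp a \<union> (\<lambda>i. i + Suc (length a)) ` supp b"
  proof (cases "i \<le> length a")
    case True
    then show ?thesis by (auto simp: supp_def nth_append)
  next
    case False
    show ?thesis
    proof (cases "i = Suc (length a)")
      case True
      then show ?thesis by (auto simp: supp_def nth_append)
    next
      case F2: False
      define j where "j = i - Suc (length a)"
      have j: "i = j + Suc (length a)" "j \<ge> 1" using False F2 unfolding j_def by auto
      have "i \<in> supp (a @ 0 # b) \<longleftrightarrow> j \<in> supp b"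
        using j by (auto simp: supp_def nth_append)
      moreover have "i \<in> (\<lambda>i. i + Suc (length a)) ` supp b \<longleftrightarrow> j \<in> supp b"
        using j by auto
      moreover have "i \<notin> supp a" using False supp_bound[of a] by auto
      ultimately show ?thesis by blast
    qed
  qed
qed

lemma is_comp_Cons[simp]: "is_comp (x # xs) \<longleftrightarrow> 0 < x \<and> is_comp xs"
  by (simp add: is_comp_def)

lemma is_comp_Nil[simp]: "is_comp []"
  by (simp add: is_comp_def)

lemma sum_pos: "is_comp \<alpha> \<Longrightarrow> \<alpha> \<noteq> [] \<Longrightarrow> 0 < sum_list \<alpha>"
  by (cases \<alpha>) auto

lemma sum_zero: "is_comp \<alpha> \<Longrightarrow> sum_list \<alpha> = 0 \<Longrightarrow> \<alpha> = []"
proof (rule ccontr)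
  assume "is_comp \<alpha>" "sum_list \<alpha> = 0" "\<alpha> \<noteq> []"
  then show False using sum_pos[of \<alpha>] by linarith
qed

lemma comp_set_Nil[simp]: "comp_set [] = {}"
  by (simp add: comp_set_def)

lemma comp_set_Cons:
  "comp_set (x # \<gamma>) = (if \<gamma> = [] then {} else insert x ((+) x ` comp_set \<gamma>))"
proof (cases "\<gamma> = []")
  case True
  then show ?thesis by (simp add: comp_set_def)
next
  case False
  have "comp_set (x # \<gamma>) = insert x ((+) x ` comp_set \<gamma>)"
  proof (rule set_eqI)
    fix s
    show "s \<in> comp_set (x # \<gamma>) \<longleftrightarrow> s \<in> insert x ((+) x ` comp_set \<gamma>)"
    proof
      assume "s \<in> comp_set (x # \<gamma>)"
      then obtain i where i: "s = sum_list (take i (x # \<gamma>))" "1 \<le> i" "i < Suc (length \<gamma>)"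
        by (auto simp: comp_set_def)
      then obtain j where j: "i = Suc j" by (cases i) auto
      show "s \<in> insert x ((+) x ` comp_set \<gamma>)"
      proof (cases j)
        case 0
        then show ?thesis using i j by simp
      next
        case (Suc m)
        then have "sum_list (take j \<gamma>) \<in> comp_set \<gamma>" using i j by (auto simp: comp_set_def)
        then show ?thesis using i j by auto
      qed
    next
      assume "s \<in> insert x ((+) x ` comp_set \<gamma>)"
      then consider "s = x" | j where "s = x + sum_list (take j \<gamma>)" "1 \<le> j" "j < length \<gamma>"
        by (auto simp: comp_set_def)
      then show "s \<in> comp_set (x # \<gamma>)"
      proof cases
        case 1
        then show ?thesis using False unfolding comp_set_def
          by (intro CollectI exI[of _ 1]) auto
      next
        case 2
        then show ?thesis unfolding comp_set_def
          by (intro CollectI exI[of _ "Suc j"]) auto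
      qed
    qed
  qed
  then show ?thesis using False by simp
qed

lemma comp_set_bound: "is_comp \<alpha> \<Longrightarrow> comp_set \<alpha> \<subseteq> {0<..<sum_list \<alpha>}"
proof (induction \<alpha>)
  case Nil
  then show ?case by simp
next
  case (Cons x \<alpha>)
  show ?case
  proof (cases "\<alpha> = []")
    case True
    then show ?thesis by (simp add: comp_set_Cons)
  next
    case False
    then have "0 < sum_list \<alpha>" using sum_pos Cons by auto
    then show ?thesis using Cons False by (auto simp: comp_set_Cons)
  qed
qed

lemma nc_Nil1[simp]: "near_concat [] \<beta> = \<beta>"
  by (simp add: near_concat_def)

lemma nc_Nil2[simp]: "near_concat \<alpha> [] = \<alpha>"
  by (simp add: near_concat_def)

lemma nc_single: "\<beta> \<noteq> [] \<Longrightarrow> near_concat [x] \<beta> = (x + hd \<beta>) # tl \<beta>"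
  by (simp add: near_concat_def)

lemma nc_cons: "\<alpha> \<noteq> [] \<Longrightarrow> near_concat (x # \<alpha>) \<beta> = x # near_concat \<alpha> \<beta>"
  by (cases "\<beta> = []") (auto simp: near_concat_def)

lemma nc_ne: "\<alpha> \<noteq> [] \<Longrightarrow> near_concat \<alpha> \<beta> \<noteq> []"
  by (simp add: near_concat_def)

lemma nc_sum: "sum_list (near_concat \<alpha> \<beta>) = sum_list \<alpha> + sum_list \<beta>"
proof (induction \<alpha>)
  case Nil
  then show ?case by simp
next
  case (Cons x \<alpha>)
  show ?case
  proof (cases "\<alpha> = []")
    case True
    then show ?thesis by (cases \<beta>) (auto simp: nc_single)
  next
    case False
    then show ?thesis using Cons by (simp add: nc_cons)
  qed
qed

lemma nc_comp_set:
  assumes "\<alpha> \<noteq> []" "\<beta> \<noteq> []"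
  shows "comp_set (near_concat \<alpha> \<beta>) = comp_set \<alpha> \<union> (+) (sum_list \<alpha>) ` comp_set \<beta>"
  using assms(1)
proof (induction \<alpha>)
  case Nil
  then show ?case by simp
next
  case (Cons x \<alpha>)
  show ?case
  proof (cases "\<alpha> = []")
    case True
    then show ?thesis using assms(2)
      by (cases \<beta>) (auto simp: nc_single comp_set_Cons image_image add.assoc)
  next
    case False
    then show ?thesis using Cons
      by (auto simp: nc_cons comp_set_Cons nc_ne image_Un image_image add.assoc)
  qed
qed

lemma nc_unique:
  assumes "is_comp \<alpha>" "is_comp \<alpha>'" "\<alpha> \<noteq> []" "\<alpha>' \<noteq> []" "\<beta> \<noteq> []" "\<beta>' \<noteq> []"
    "near_concat \<alpha> \<beta> = near_concat \<alpha>' \<beta>'" "sum_list \<alpha> = sum_list \<alpha>'"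
  shows "\<alpha> = \<alpha>' \<and> \<beta> = \<beta>'"
  using assms
proof (induction \<alpha> arbitrary: \<alpha>')
  case Nil
  then show ?case by simp
next
  case (Cons x \<alpha>1)
  obtain y \<alpha>1' where a': "\<alpha>' = y # \<alpha>1'" using Cons.prems by (cases \<alpha>') auto
  show ?case
  proof (cases "\<alpha>1 = []"; cases "\<alpha>1' = []")
    assume "\<alpha>1 = []" "\<alpha>1' = []"
    then show ?thesis using Cons.prems a'
      by (auto simp: nc_single) (metis list.collapse)
  next
    assume h: "\<alpha>1 = []" "\<alpha>1' \<noteq> []"
    then have "0 < sum_list \<alpha>1'" using sum_pos Cons.prems a' by auto
    then show ?thesis using Cons.prems a' h by (auto simp: nc_single nc_cons)
  next
    assume h: "\<alpha>1 \<noteq> []" "\<alpha>1' = []"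
    then have p: "0 < sum_list \<alpha>1" using sum_pos Cons.prems by auto
    have "x # near_concat \<alpha>1 \<beta> = (y + hd \<beta>') # tl \<beta>'"
      using Cons.prems a' h by (simp add: nc_single nc_cons)
    moreover have "x + sum_list \<alpha>1 = y" using Cons.prems a' h by simp
    ultimately show ?thesis using p by simp
  next
    assume h: "\<alpha>1 \<noteq> []" "\<alpha>1' \<noteq> []"
    then have "x = y" "near_concat \<alpha>1 \<beta> = near_concat \<alpha>1' \<beta>'"
      using Cons.prems a' by (auto simp: nc_cons)
    then show ?thesis using Cons.IH[of \<alpha>1'] Cons.prems a' h by auto
  qed
qed

lemma nc_exists:
  assumes "is_comp \<gamma>" "0 < k" "k < sum_list \<gamma>" "k \<notin> comp_set \<gamma>"
  shows "\<exists>\<alpha> \<beta>. is_comp \<alpha> \<and> is_comp \<beta> \<and> near_concat \<alpha> \<beta> = \<gamma> \<and> sum_list \<alpha> = k"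
  using assms
proof (induction \<gamma> arbitrary: k)
  case Nil
  then show ?case by simp
next
  case (Cons x \<gamma>)
  consider "k < x" | "k = x" | "x < k" by linarith
  then show ?case
  proof cases
    case 1
    then show ?thesis using Cons.prems
      by (intro exI[of _ "[k]"] exI[of _ "(x - k) # \<gamma>"]) (auto simp: nc_single)
  next
    case 2
    then have "\<gamma> \<noteq> []" using Cons.prems by auto
    then show ?thesis using 2 Cons.prems by (auto simp: comp_set_Cons)
  next
    case 3
    then have ne: "\<gamma> \<noteq> []" using Cons.prems by auto
    have "k - x \<notin> comp_set \<gamma>"
    proof
      assume "k - x \<in> comp_set \<gamma>"
      then have "k \<in> (+) x ` comp_set \<gamma>" using 3 by (auto intro: image_eqI[of _ _ "k - x"])
      then show False using Cons.prems ne by (auto simp: comp_set_Cons)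
    qed
    then obtain \<alpha> \<beta> where ab: "is_comp \<alpha>" "is_comp \<beta>" "near_concat \<alpha> \<beta> = \<gamma>" "sum_list \<alpha> = k - x"
    proof -
      have "is_comp \<gamma>" "0 < k - x" "k - x < sum_list \<gamma>" using Cons.prems 3 by auto
      then show ?thesis using Cons.IH[of "k - x"] \<open>k - x \<notin> comp_set \<gamma>\<close> that by blast
    qed
    then have "\<alpha> \<noteq> []" using 3 by auto
    then show ?thesis using ab Cons.prems 3
      by (intro exI[of _ "x # \<alpha>"] exI[of _ \<beta>]) (auto simp: nc_cons)
  qed
qed

lemma split_sets:
  fixes A A' B B' :: "nat set"
  assumes "A \<subseteq> {..<k}" "A' \<subseteq> {..<k}" "B \<subseteq> {1..}" "B' \<subseteq> {1..}"
    "A \<union> (+) k ` B = A' \<union> (+) k ` B'"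
  shows "A = A' \<and> B = B'"
proof -
  have "A = (A \<union> (+) k ` B) \<inter> {..<k}" "A' = (A' \<union> (+) k ` B') \<inter> {..<k}"
    using assms by auto
  then have 1: "A = A'" using assms(5) by simp
  have "(+) k ` B = (A \<union> (+) k ` B) \<inter> {k..}" "(+) k ` B' = (A' \<union> (+) k ` B') \<inter> {k..}"
    using assms by auto
  then have "(+) k ` B = (+) k ` B'" using assms(5) by simp
  then have "B = B'" by (simp add: inj_image_eq_iff)
  with 1 show ?thesis by simp
qed

theorem proposition3p17:
  fixes \<nu> n k :: nat and \<gamma> a b :: "nat list"
  assumes "\<nu> > 1"
    and "is_comp \<gamma>" and "sum_list \<gamma> = n"
    and "k \<le> n" and "a \<in> Q \<nu> k" and "b \<in> Q \<nu> (n - k)"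
  shows "(coprod_k n (kappa (comp_set \<gamma>)) k a b :: 'r::comm_ring_1) =
    (\<Sum>(\<alpha>, \<beta>) \<in> {(\<alpha>, \<beta>). is_comp \<alpha> \<and> is_comp \<beta> \<and> near_concat \<alpha> \<beta> = \<gamma> \<and> sum_list \<alpha> = k}.
        kappa (comp_set \<alpha>) a * kappa (comp_set \<beta>) b)"
proof -
  define S where "S = {(\<alpha>, \<beta>). is_comp \<alpha> \<and> is_comp \<beta> \<and> near_concat \<alpha> \<beta> = \<gamma> \<and> sum_list \<alpha> = k}"
  have la: "length a = k - 1" and lb: "length b = n - k - 1"
    using assms(5,6) by (auto simp: Q_def)
  have k1: "kappa {} [] = (1::'r)" by (simp add: kappa_supp supp_Nil)
  consider "k = 0" | "k = n" "0 < k" | "0 < k" "k < n" using assms(4) by linarith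
  then show ?thesis
  proof cases
    case 1
    have S: "S = {([], \<gamma>)}" using assms(2) 1 by (auto simp: S_def dest: sum_zero)
    have "a = []" using la 1 by simp
    then show ?thesis unfolding S_def[symmetric] S using 1 by (simp add: coprod_k_def k1)
  next
    case 2
    have S: "S = {(\<gamma>, [])}"
    proof
      show "S \<subseteq> {(\<gamma>, [])}"
      proof
        fix p assume "p \<in> S"
        then obtain \<alpha> \<beta> where p: "p = (\<alpha>, \<beta>)" "is_comp \<alpha>" "is_comp \<beta>"
          "near_concat \<alpha> \<beta> = \<gamma>" "sum_list \<alpha> = k" by (auto simp: S_def)
        then have "sum_list \<beta> = 0" using nc_sum[of \<alpha> \<beta>] assms(3) 2 by simp
        then have "\<beta> = []" using p sum_zero by blast
        then show "p \<in> {(\<gamma>, [])}" using p by simp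
      qed
    next
      show "{(\<gamma>, [])} \<subseteq> S" using assms 2 by (simp add: S_def)
    qed
    have "b = []" using lb 2 by simp
    then show ?thesis unfolding S_def[symmetric] S using 2 by (simp add: coprod_k_def k1)
  next
    case 3
    have lhs: "coprod_k n (kappa (comp_set \<gamma>)) k a b = (kappa (comp_set \<gamma>) (a @ 0 # b) :: 'r)"
      using 3 by (simp add: coprod_k_def)
    have sab: "supp (a @ 0 # b) = supp a \<union> (+) k ` supp b"
      using supp_app[of a b] la 3 by (simp add: add.commute)
    have sa: "supp a \<subseteq> {..<k}" using supp_bound[of a] la 3 by force
    have sb: "supp b \<subseteq> {1..}" using supp_bound[of b] by auto
    have memS: "\<alpha> \<noteq> [] \<and> \<beta> \<noteq> [] \<and> comp_set \<gamma> = comp_set \<alpha> \<union> (+) k ` comp_set \<beta>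
        \<and> comp_set \<alpha> \<subseteq> {..<k} \<and> comp_set \<beta> \<subseteq> {1..}"
      if "(\<alpha>, \<beta>) \<in> S" for \<alpha> \<beta>
    proof -
      have p: "is_comp \<alpha>" "is_comp \<beta>" "near_concat \<alpha> \<beta> = \<gamma>" "sum_list \<alpha> = k"
        using that by (auto simp: S_def)
      have "sum_list \<beta> = n - k" using nc_sum[of \<alpha> \<beta>] p assms(3) by simp
      then have ne: "\<alpha> \<noteq> []" "\<beta> \<noteq> []" using p 3 by auto
      have "comp_set \<gamma> = comp_set \<alpha> \<union> (+) k ` comp_set \<beta>"
        using nc_comp_set[OF ne] p by simp
      moreover have "comp_set \<alpha> \<subseteq> {..<k}" using comp_set_bound[OF p(1)] p(4) by force
      moreover have "comp_set \<beta> \<subseteq> {1..}" using comp_set_bound[OF p(2)] by force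
      ultimately show ?thesis using ne by blast
    qed
    show ?thesis
    proof (cases "supp (a @ 0 # b) = comp_set \<gamma>")
      case True
      have "k \<notin> comp_set \<gamma>"
      proof
        assume "k \<in> comp_set \<gamma>"
        then have "k \<in> supp a \<or> k \<in> (+) k ` supp b" using True sab by (metis Un_iff)
        then show False using sa sb by fastforce
      qed
      then obtain \<alpha>0 \<beta>0 where ab0: "is_comp \<alpha>0" "is_comp \<beta>0" "near_concat \<alpha>0 \<beta>0 = \<gamma>" "sum_list \<alpha>0 = k"
        using nc_exists[of \<gamma> k] assms 3 by blast
      then have in0: "(\<alpha>0, \<beta>0) \<in> S" by (simp add: S_def)
      have S: "S = {(\<alpha>0, \<beta>0)}"
      proof
        show "S \<subseteq> {(\<alpha>0, \<beta>0)}"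
        proof
          fix p assume pS: "p \<in> S"
          then obtain \<alpha> \<beta> where p: "p = (\<alpha>, \<beta>)" "is_comp \<alpha>" "is_comp \<beta>"
            "near_concat \<alpha> \<beta> = \<gamma>" "sum_list \<alpha> = k" by (auto simp: S_def)
          have "(\<alpha>, \<beta>) \<in> S" using pS p(1) by simp
          then have ne: "\<alpha> \<noteq> []" "\<beta> \<noteq> []" using memS[of \<alpha> \<beta>] by blast+
          have ne0: "\<alpha>0 \<noteq> []" "\<beta>0 \<noteq> []" using memS[OF in0] by blast+
          have "near_concat \<alpha> \<beta> = near_concat \<alpha>0 \<beta>0" using p(4) ab0(3) by simp
          moreover have "sum_list \<alpha> = sum_list \<alpha>0" using p(5) ab0(4) by simp
          ultimately have "\<alpha> = \<alpha>0 \<and> \<beta> = \<beta>0"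
            using nc_unique[OF p(2) ab0(1) ne(1) ne0(1) ne(2) ne0(2)] by blast
          then show "p \<in> {(\<alpha>0, \<beta>0)}" using p by simp
        qed
      qed (use in0 in simp)
      have m0: "comp_set \<gamma> = comp_set \<alpha>0 \<union> (+) k ` comp_set \<beta>0"
        "comp_set \<alpha>0 \<subseteq> {..<k}" "comp_set \<beta>0 \<subseteq> {1..}" using memS[OF in0] by blast+
      have eq: "comp_set \<alpha>0 \<union> (+) k ` comp_set \<beta>0 = supp a \<union> (+) k ` supp b"
        using m0(1) True sab by metis
      have "comp_set \<alpha>0 = supp a \<and> comp_set \<beta>0 = supp b"
        using split_sets[OF m0(2) sa m0(3) sb eq] .
      then have "kappa (comp_set \<alpha>0) a * kappa (comp_set \<beta>0) b = (1::'r)"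
        by (simp add: kappa_supp)
      moreover have "kappa (comp_set \<gamma>) (a @ 0 # b) = (1::'r)"
        using True by (simp add: kappa_supp)
      ultimately show ?thesis unfolding S_def[symmetric] S lhs by simp
    next
      case False
      have "(\<Sum>(\<alpha>, \<beta>) \<in> S. kappa (comp_set \<alpha>) a * kappa (comp_set \<beta>) b) = (0::'r)"
      proof (rule sum.neutral, safe)
        fix \<alpha> \<beta> assume ab: "(\<alpha>, \<beta>) \<in> S"
        have cg: "comp_set \<gamma> = comp_set \<alpha> \<union> (+) k ` comp_set \<beta>" using memS[OF ab] by blast
        have "\<not> (supp a = comp_set \<alpha> \<and> supp b = comp_set \<beta>)"
        proof
          assume "supp a = comp_set \<alpha> \<and> supp b = comp_set \<beta>"
          then have "supp (a @ 0 # b) = comp_set \<gamma>" using sab cg by simp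
          then show False using False by contradiction
        qed
        then show "kappa (comp_set \<alpha>) a * kappa (comp_set \<beta>) b = (0::'r)"
          by (auto simp: kappa_supp)
      qed
      then show ?thesis unfolding S_def[symmetric] lhs using False by (simp add: kappa_supp)
    qed
  qed
qed

end
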